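(* Let $\operatorname{sinc}(x)=\frac{\sin(\pi x)}{\pi x}$ for $x\neq 0$ and $\operatorname{sinc}(0)=1$. Let $\tau\in(0,1)$ and, for an integer $n\ge 1$, define \[ G(n,\tau)\;=\;\sum_{t\in\mathbb{Z}\setminus\{0\}}\operatorname{sinc}(t-\tau)^n \;=\;\sum_{t=1}^{\infty}\operatorname{sinc}(t-\tau)^n+\sum_{t=1}^{\infty}\operatorname{sinc}(-t-\tau)^n . \] Then \[ G(n,\tau)=\begin{cases} 1-\operatorname{sinc}(\tau) & \text{if } n=1,\\[2pt] \operatorname{sinc}(\tau)^n\Big(\tau^n\big(\zeta(n,\tau)+\zeta(n,-\tau)\big)-2\Big) & \text{if } n \text{ is even},\\[2pt] \operatorname{sinc}(\tau)^n\Big(\tau^n\big(\zeta^*(n,\tau)-\zeta^*(n,-\tau)\big)-2\Big) & \text{if } n\ge 3 \text{ is odd}. \end{cases} \]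
   Context: For an integer $s\ge 2$ and a real number $q$ that is not a non-positive integer, the Hurwitz zeta function is $\zeta(s,q)=\sum_{k=0}^{\infty}\frac{1}{(k+q)^s}$ and the alternating Hurwitz zeta function is $\zeta^*(s,q)=\sum_{k=0}^{\infty}\frac{(-1)^k}{(k+q)^s}$ (in particular these series are used with $q=\tau$ and $q=-\tau$, $\tau\in(0,1)$). *)

theory Defs
  imports "HOL-Analysis.Analysis"
begin

definition sinc :: "real \<Rightarrow> real" where
  "sinc x = (if x = 0 then 1 else sin (pi * x) / (pi * x))"

definition hurwitz_zeta :: "nat \<Rightarrow> real \<Rightarrow> real" where
  "hurwitz_zeta s q = (\<Sum>k. 1 / (real k + q) ^ s)"

definition alt_hurwitz_zeta :: "nat \<Rightarrow> real \<Rightarrow> real" where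
  "alt_hurwitz_zeta s q = (\<Sum>k. (-1) ^ k / (real k + q) ^ s)"

definition G :: "nat \<Rightarrow> real \<Rightarrow> real" where
  "G n \<tau> = (\<Sum>t. sinc (real (Suc t) - \<tau>) ^ n) + (\<Sum>t. sinc (- real (Suc t) - \<tau>) ^ n)"

end

theory Submission
  imports Defs
begin

lemma Gamma_refl_real:
  fixes x :: real assumes "0 < x" "x < 1"
  shows "Gamma x * Gamma (1 - x) = pi / sin (pi * x)"
proof -
  have "Gamma (complex_of_real x) * Gamma (1 - complex_of_real x) = of_real pi / sin (of_real pi * of_real x)"
    by (rule Gamma_reflection_complex)
  also have "1 - complex_of_real x = of_real (1 - x)" by simp
  also have "sin (complex_of_real pi * of_real x) = of_real (sin (pi * x))"
    by (metis of_real_mult sin_of_real)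
  finally have "complex_of_real (Gamma x * Gamma (1 - x)) = complex_of_real (pi / sin (pi * x))"
    using Gamma_complex_of_real[of "1-x"] by (simp add: Gamma_complex_of_real)
  then show ?thesis using of_real_eq_iff by blast
qed

lemma sin_pi_pos: fixes x :: real assumes "0 < x" "x < 1" shows "sin (pi * x) > 0"
  using assms by (intro sin_gt_zero) auto

lemma Digamma_refl_real:
  fixes x :: real assumes x: "0 < x" "x < 1"
  shows "Digamma (1 - x) - Digamma x = pi * cos (pi * x) / sin (pi * x)"
proof -
  define h where "h y = ln_Gamma y + ln_Gamma (1 - y) + ln (sin (pi * y))" for y :: real
  have hc: "h y = ln pi" if "0 < y" "y < 1" for y
  proof -
    have g1: "Gamma y > 0" "Gamma (1 - y) > 0" using that by auto
    have "h y = ln (Gamma y * Gamma (1 - y) * sin (pi * y))"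
    proof -
      have "ln (Gamma y * Gamma (1 - y) * sin (pi * y)) = ln (Gamma y * Gamma (1 - y)) + ln (sin (pi * y))"
        using g1 sin_pi_pos[OF that] by (intro ln_mult_pos) auto
      also have "ln (Gamma y * Gamma (1 - y)) = ln (Gamma y) + ln (Gamma (1 - y))"
        using g1 by (intro ln_mult_pos) auto
      finally show ?thesis using that unfolding h_def by (simp add: ln_Gamma_real_pos)
    qed
    also have "\<dots> = ln pi" using that sin_pi_pos[OF that] by (simp add: Gamma_refl_real)
    finally show ?thesis .
  qed
  have d1: "(h has_field_derivative (Digamma x - Digamma (1 - x) + pi * cos (pi * x) / sin (pi * x))) (at x)"
    unfolding h_def using x sin_pi_pos[OF x]
    by (auto intro!: derivative_eq_intros simp: field_simps)
  have "eventually (\<lambda>y. y \<in> {0<..<1}) (nhds x)"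
    using x by (intro eventually_nhds_in_open) auto
  then have ev: "eventually (\<lambda>y. h y = ln pi) (nhds x)"
    by eventually_elim (auto intro: hc)
  have d2: "(h has_field_derivative 0) (at x)"
    by (subst DERIV_cong_ev[OF refl ev refl]) (rule DERIV_const)
  from DERIV_unique[OF d1 d2] show ?thesis by simp
qed

lemma cot_series:
  fixes z :: real assumes z: "0 < z" "z < 1"
  shows "(\<lambda>k. 1 / (z + real k) - 1 / (1 - z + real k)) sums (pi * cos (pi * z) / sin (pi * z))"
proof -
  have s1: "(\<lambda>k. inverse (real (Suc k)) - inverse (z + real k)) sums (Digamma z + euler_mascheroni)"
    using summable_Digamma[of z] z by (simp add: Digamma_def summable_sums)
  have s2: "(\<lambda>k. inverse (real (Suc k)) - inverse ((1 - z) + real k)) sums (Digamma (1 - z) + euler_mascheroni)"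
    using summable_Digamma[of "1 - z"] z by (simp add: Digamma_def summable_sums)
  from sums_diff[OF s2 s1] have "(\<lambda>k. 1 / (z + real k) - 1 / (1 - z + real k)) sums (Digamma (1 - z) - Digamma z)"
    by (simp add: inverse_eq_divide)
  thus ?thesis using Digamma_refl_real[OF z] by simp
qed

lemma csc_series:
  fixes t :: real assumes t: "0 < t" "t < 1"
  shows "(\<lambda>m. (-1) ^ m * (1 / (real m + t) + 1 / (real m + 1 - t))) sums (pi / sin (pi * t))"
proof -
  define f where "f m = 1 / (real m + t)" for m
  define g where "g m = 1 / (real m + 1 - t)" for m
  define a where "a m = f m + g m" for m
  have a_lim: "a \<longlonglongrightarrow> 0"
  proof -
    have "(\<lambda>m. 1 / (t + real m)) \<longlonglongrightarrow> 0"
      by (intro tendsto_divide_0[OF tendsto_const] filterlim_at_top_imp_at_infinity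
           filterlim_tendsto_add_at_top[OF tendsto_const filterlim_real_sequentially])
    moreover have "(\<lambda>m. 1 / ((1 - t) + real m)) \<longlonglongrightarrow> 0"
      by (intro tendsto_divide_0[OF tendsto_const] filterlim_at_top_imp_at_infinity
           filterlim_tendsto_add_at_top[OF tendsto_const filterlim_real_sequentially])
    moreover have "a = (\<lambda>m. 1 / (t + real m) + 1 / ((1 - t) + real m))"
      unfolding a_def f_def g_def by (rule ext) (simp add: algebra_simps)
    ultimately show ?thesis using tendsto_add[of "\<lambda>m. 1 / (t + real m)" 0 sequentially "\<lambda>m. 1 / ((1 - t) + real m)" 0] by simp
  qed
  have a_nonneg: "0 \<le> a m" for m using t by (simp add: a_def f_def g_def)
  have a_dec: "a (Suc m) \<le> a m" for m
  proof -
    have "f (Suc m) \<le> f m" using t unfolding f_def by (intro divide_left_mono) auto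
    moreover have "g (Suc m) \<le> g m" using t unfolding g_def by (intro divide_left_mono) auto
    ultimately show ?thesis by (simp add: a_def)
  qed
  have summ: "summable (\<lambda>m. (-1) ^ m * a m)"
    using summable_Leibniz'(1)[of a] a_lim a_nonneg a_dec by blast
  hence grp: "(\<lambda>k. \<Sum>m\<in>{k*2..<k*2+2}. (-1) ^ m * a m) sums (\<Sum>m. (-1) ^ m * a m)"
    by (intro sums_group summable_sums) auto
  have c1: "(\<lambda>m. f m - g m) sums (pi * cos (pi * t) / sin (pi * t))"
  proof -
    have "(\<lambda>m. f m - g m) = (\<lambda>k. 1 / (t + real k) - 1 / (1 - t + real k))"
      unfolding f_def g_def by (rule ext) (simp add: algebra_simps)
    thus ?thesis using cot_series[OF t] by simp
  qed
  hence c1g: "(\<lambda>k. \<Sum>m\<in>{k*2..<k*2+2}. f m - g m) sums (pi * cos (pi * t) / sin (pi * t))"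
    by (intro sums_group) auto
  have c2: "(\<lambda>k. 2 * f (2*k) - 2 * g (2*k+1)) sums (pi * cos (pi * (t/2)) / sin (pi * (t/2)))"
  proof -
    have "(\<lambda>k. 1 / (t/2 + real k) - 1 / (1 - t/2 + real k)) sums (pi * cos (pi * (t/2)) / sin (pi * (t/2)))"
      using t by (intro cot_series) auto
    moreover have "1 / (t/2 + real k) - 1 / (1 - t/2 + real k) = 2 * f (2*k) - 2 * g (2*k+1)" for k
      using t unfolding f_def g_def by (simp add: field_simps)
    ultimately show ?thesis by simp
  qed
  have trig: "pi * cos (pi * (t/2)) / sin (pi * (t/2)) - pi * cos (pi * t) / sin (pi * t) = pi / sin (pi * t)"
  proof -
    define b where "b = pi * (t/2)"
    have pt: "pi * t = 2 * b" by (simp add: b_def)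
    have sb: "sin b > 0" unfolding b_def using t by (intro sin_pi_pos) auto
    have st: "sin (2*b) > 0" unfolding pt[symmetric] using sin_pi_pos[OF t] .
    have cb: "cos b \<noteq> 0" using st by (auto simp: sin_double)
    have pb: "pi * (t/2) = b" by (simp add: b_def)
    have key: "cos b / sin b - cos (2*b) / sin (2*b) = 1 / sin (2*b)"
      using sb cb unfolding sin_double cos_double
      by (simp add: field_simps power2_eq_square)
    have "pi * cos b / sin b - pi * cos (2*b) / sin (2*b) = pi * (cos b / sin b - cos (2*b) / sin (2*b))"
      by (simp add: field_simps)
    also have "\<dots> = pi / sin (2*b)" using key by simp
    finally show ?thesis unfolding pt pb .
  qed
  have "(\<lambda>k. (2 * f (2*k) - 2 * g (2*k+1)) - (\<Sum>m\<in>{k*2..<k*2+2}. f m - g m)) sums (pi / sin (pi * t))"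
    using sums_diff[OF c2 c1g] trig by simp
  moreover have "(2 * f (2*k) - 2 * g (2*k+1)) - (\<Sum>m\<in>{k*2..<k*2+2}. f m - g m) = (\<Sum>m\<in>{k*2..<k*2+2}. (-1) ^ m * a m)" for k
  proof -
    have e: "{k*2..<k*2+2} = {2*k, 2*k+1}" by auto
    show ?thesis unfolding e a_def by (simp add: algebra_simps)
  qed
  ultimately have "(\<lambda>k. \<Sum>m\<in>{k*2..<k*2+2}. (-1) ^ m * a m) sums (pi / sin (pi * t))" by simp
  with grp have "(\<Sum>m. (-1) ^ m * a m) = pi / sin (pi * t)" using sums_unique2 by blast
  with summ have "(\<lambda>m. (-1) ^ m * a m) sums (pi / sin (pi * t))" using summable_sums by fastforce
  thus ?thesis by (simp add: a_def f_def g_def)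
qed

lemma hz_summable:
  fixes q :: real assumes "q \<noteq> 0" "n \<ge> 2"
  shows "summable (\<lambda>k. 1 / (real k + q) ^ n)"
  using Polygamma_converges'[OF assms] by (simp add: inverse_eq_divide add_ac)

lemma hz_split:
  fixes q :: real assumes "q \<noteq> 0" "n \<ge> 2"
  shows "hurwitz_zeta n q = 1 / q ^ n + (\<Sum>t. 1 / (real (Suc t) + q) ^ n)"
  using suminf_split_head[OF hz_summable[OF assms]] unfolding hurwitz_zeta_def by simp

lemma az_summable:
  fixes q :: real assumes "q > -1" "q \<noteq> 0" "n \<ge> 2"
  shows "summable (\<lambda>k. (-1) ^ k / (real k + q) ^ n)"
proof (rule summable_comparison_test'[OF hz_summable[OF assms(2,3)], of 1])
  fix k :: nat assume "1 \<le> k"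
  hence "real k + q > 0" using assms by linarith
  thus "norm ((-1) ^ k / (real k + q) ^ n) \<le> 1 / (real k + q) ^ n"
    by (simp add: abs_mult power_abs)
qed

lemma az_split:
  fixes q :: real assumes "q > -1" "q \<noteq> 0" "n \<ge> 2"
  shows "alt_hurwitz_zeta n q = 1 / q ^ n + (\<Sum>t. (-1) ^ Suc t / (real (Suc t) + q) ^ n)"
  using suminf_split_head[OF az_summable[OF assms]] unfolding alt_hurwitz_zeta_def by simp

lemma leib_summable:
  fixes c :: real assumes "c > 0"
  shows "summable (\<lambda>m. (-1) ^ m * (1 / (real m + c)))"
proof (rule summable_Leibniz'(1))
  show "(\<lambda>m. 1 / (real m + c)) \<longlonglongrightarrow> 0"
    using tendsto_divide_0[OF tendsto_const filterlim_at_top_imp_at_infinity[OF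
           filterlim_tendsto_add_at_top[OF tendsto_const[of c] filterlim_real_sequentially]], of 1]
    by (simp add: add_ac)
  show "0 \<le> 1 / (real m + c)" for m using assms by simp
  show "1 / (real (Suc m) + c) \<le> 1 / (real m + c)" for m
    using assms by (intro divide_left_mono) auto
qed

lemma sinc_pos_shift:
  fixes \<tau> :: real assumes "0 < \<tau>" "\<tau> < 1"
  shows "sinc (real (Suc t) - \<tau>) = sinc \<tau> * \<tau> * ((-1) ^ t / (real (Suc t) - \<tau>))"
proof -
  have ne: "real (Suc t) - \<tau> \<noteq> 0" using assms by simp
  have "sin (pi * (real (Suc t) - \<tau>)) = sin (real (Suc t) * pi - pi * \<tau>)"
    by (simp add: algebra_simps)
  also have "\<dots> = (-1) ^ t * sin (pi * \<tau>)"
    unfolding sin_diff sin_npi using cos_npi2[of "Suc t"] by (simp add: mult.commute)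
  finally have "sin (pi * (real (Suc t) - \<tau>)) = (-1) ^ t * sin (pi * \<tau>)" .
  thus ?thesis using ne assms unfolding sinc_def by (simp add: field_simps)
qed

lemma sinc_neg_shift:
  fixes \<tau> :: real assumes "0 < \<tau>" "\<tau> < 1"
  shows "sinc (- real (Suc t) - \<tau>) = sinc \<tau> * \<tau> * ((-1) ^ Suc t / (real (Suc t) + \<tau>))"
proof -
  have ne: "- real (Suc t) - \<tau> \<noteq> 0" "real (Suc t) + \<tau> \<noteq> 0" using assms by simp_all
  have "sin (pi * (- real (Suc t) - \<tau>)) = - sin (real (Suc t) * pi + pi * \<tau>)"
  proof -
    have "pi * (- real (Suc t) - \<tau>) = - (real (Suc t) * pi + pi * \<tau>)" by (simp add: algebra_simps)
    thus ?thesis by (simp only: sin_minus)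
  qed
  also have "\<dots> = - ((-1) ^ Suc t * sin (pi * \<tau>))"
    unfolding sin_add sin_npi using cos_npi2[of "Suc t"] by (simp add: mult.commute)
  finally have "sin (pi * (- real (Suc t) - \<tau>)) = - ((-1) ^ Suc t * sin (pi * \<tau>))" .
  moreover have p: "pi * (- real (Suc t) - \<tau>) = - (pi * (real (Suc t) + \<tau>))" by (simp add: algebra_simps)
  moreover have "pi * (real (Suc t) + \<tau>) \<noteq> 0" "pi * \<tau> \<noteq> 0" using assms by auto
  ultimately show ?thesis using ne unfolding sinc_def
    by (simp only: if_False) (simp add: field_simps)
qed

lemma G_case1:
  fixes \<tau> :: real assumes t: "0 < \<tau>" "\<tau> < 1"
  shows "G 1 \<tau> = 1 - sinc \<tau>"
proof -
  define c where "c = sinc \<tau> * \<tau>"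
  define P where "P = (\<Sum>m. (-1) ^ m * (1 / (real m + \<tau>)))"
  define Q where "Q = (\<Sum>m. (-1) ^ m * (1 / (real m + (1 - \<tau>))))"
  have sP: "summable (\<lambda>m. (-1) ^ m * (1 / (real m + \<tau>)))" using t by (intro leib_summable) auto
  have sQ: "summable (\<lambda>m. (-1) ^ m * (1 / (real m + (1 - \<tau>))))" using t by (intro leib_summable) auto
  have PQ: "P + Q = pi / sin (pi * \<tau>)"
  proof -
    have "(\<lambda>m. (-1) ^ m * (1 / (real m + \<tau>)) + (-1) ^ m * (1 / (real m + (1 - \<tau>)))) sums (P + Q)"
      unfolding P_def Q_def using sP sQ by (intro sums_add summable_sums)
    moreover have "(\<lambda>m. (-1) ^ m * (1 / (real m + \<tau>)) + (-1) ^ m * (1 / (real m + (1 - \<tau>))))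
        = (\<lambda>m. (-1) ^ m * (1 / (real m + \<tau>) + 1 / (real m + 1 - \<tau>)))"
      by (rule ext) (simp add: algebra_simps)
    ultimately show ?thesis using csc_series[OF t] sums_unique2 by simp
  qed
  have e1: "(\<Sum>t. sinc (real (Suc t) - \<tau>) ^ 1) = c * Q"
  proof -
    have "(\<lambda>k. sinc (real (Suc k) - \<tau>) ^ 1) = (\<lambda>k. c * ((-1) ^ k * (1 / (real k + (1 - \<tau>)))))"
      by (rule ext, subst sinc_pos_shift[OF t]) (simp add: c_def algebra_simps)
    thus ?thesis using suminf_mult[OF sQ, of c] Q_def by simp
  qed
  have e2: "(\<Sum>t. sinc (- real (Suc t) - \<tau>) ^ 1) = c * (P - 1 / \<tau>)"
  proof -
    have "(\<lambda>k. sinc (- real (Suc k) - \<tau>) ^ 1) = (\<lambda>k. c * ((-1) ^ Suc k * (1 / (real (Suc k) + \<tau>))))"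
      by (rule ext, subst sinc_neg_shift[OF t]) (simp add: c_def)
    moreover have "summable (\<lambda>k. (-1) ^ Suc k * (1 / (real (Suc k) + \<tau>)))"
      using sP by (subst summable_Suc_iff)
    moreover have "(\<Sum>k. (-1) ^ Suc k * (1 / (real (Suc k) + \<tau>))) = P - 1 / \<tau>"
      using suminf_split_head[OF sP] P_def by simp
    ultimately show ?thesis using suminf_mult[of "\<lambda>k. (-1) ^ Suc k * (1 / (real (Suc k) + \<tau>))" c] by simp
  qed
  have "G 1 \<tau> = c * (P + Q) - c / \<tau>" unfolding G_def e1 e2 by (simp add: algebra_simps)
  also have "\<dots> = 1 - sinc \<tau>"
    using t sin_pi_pos[OF t] unfolding PQ c_def sinc_def by (simp add: field_simps)
  finally show ?thesis .
qed

lemma G_even: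
  fixes \<tau> :: real assumes t: "0 < \<tau>" "\<tau> < 1" and n: "even n" "n \<ge> 2"
  shows "G n \<tau> = sinc \<tau> ^ n * (\<tau> ^ n * (hurwitz_zeta n \<tau> + hurwitz_zeta n (- \<tau>)) - 2)"
proof -
  define c where "c = sinc \<tau> * \<tau>"
  define A where "A = (\<Sum>t. 1 / (real (Suc t) + - \<tau>) ^ n)"
  define B where "B = (\<Sum>t. 1 / (real (Suc t) + \<tau>) ^ n)"
  have ev: "((-1::real) ^ k) ^ n = 1" for k
  proof -
    have "((-1::real) ^ k) ^ n = (-1) ^ (k * n)" by (simp add: power_mult)
    thus ?thesis using n by simp
  qed
  have sA: "summable (\<lambda>t. 1 / (real (Suc t) + - \<tau>) ^ n)"
    using hz_summable[of "- \<tau>" n] t n by (subst summable_Suc_iff) auto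
  have sB: "summable (\<lambda>t. 1 / (real (Suc t) + \<tau>) ^ n)"
    using hz_summable[of "\<tau>" n] t n by (subst summable_Suc_iff) auto
  have e1: "(\<Sum>t. sinc (real (Suc t) - \<tau>) ^ n) = c ^ n * A"
  proof -
    have "(\<lambda>k. sinc (real (Suc k) - \<tau>) ^ n) = (\<lambda>k. c ^ n * (1 / (real (Suc k) + - \<tau>) ^ n))"
      by (rule ext, subst sinc_pos_shift[OF t], simp only: c_def power_mult_distrib power_divide ev) simp
    thus ?thesis using suminf_mult[OF sA, of "c ^ n"] A_def by simp
  qed
  have e2: "(\<Sum>t. sinc (- real (Suc t) - \<tau>) ^ n) = c ^ n * B"
  proof -
    have "(\<lambda>k. sinc (- real (Suc k) - \<tau>) ^ n) = (\<lambda>k. c ^ n * (1 / (real (Suc k) + \<tau>) ^ n))"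
      by (rule ext, subst sinc_neg_shift[OF t], simp only: c_def power_mult_distrib power_divide ev)
    thus ?thesis using suminf_mult[OF sB, of "c ^ n"] B_def by simp
  qed
  have h1: "hurwitz_zeta n \<tau> = 1 / \<tau> ^ n + B" unfolding B_def using t n by (intro hz_split) auto
  have h2: "hurwitz_zeta n (- \<tau>) = 1 / \<tau> ^ n + A"
    using hz_split[of "- \<tau>" n] t n unfolding A_def by simp
  have tn: "\<tau> ^ n \<noteq> 0" using t by simp
  show ?thesis unfolding G_def e1 e2 h1 h2 c_def using tn
    by (simp add: power_mult_distrib field_simps)
qed

lemma G_odd:
  fixes \<tau> :: real assumes t: "0 < \<tau>" "\<tau> < 1" and n: "odd n" "n \<ge> 3"
  shows "G n \<tau> = sinc \<tau> ^ n * (\<tau> ^ n * (alt_hurwitz_zeta n \<tau> - alt_hurwitz_zeta n (- \<tau>)) - 2)"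
proof -
  define c where "c = sinc \<tau> * \<tau>"
  define A where "A = (\<Sum>t. (-1) ^ Suc t / (real (Suc t) + - \<tau>) ^ n)"
  define B where "B = (\<Sum>t. (-1) ^ Suc t / (real (Suc t) + \<tau>) ^ n)"
  have od: "((-1::real) ^ k) ^ n = (-1) ^ k" for k
  proof -
    have "((-1::real) ^ k) ^ n = ((-1) ^ n) ^ k" by (simp add: power_mult[symmetric] mult.commute)
    thus ?thesis using n by simp
  qed
  have n2: "n \<ge> 2" using n by simp
  have sA: "summable (\<lambda>t. (-1) ^ Suc t / (real (Suc t) + - \<tau>) ^ n)"
    using az_summable[of "- \<tau>" n] t n2 by (subst summable_Suc_iff) auto
  have sB: "summable (\<lambda>t. (-1) ^ Suc t / (real (Suc t) + \<tau>) ^ n)"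
    using az_summable[of "\<tau>" n] t n2 by (subst summable_Suc_iff) auto
  have e1: "(\<Sum>t. sinc (real (Suc t) - \<tau>) ^ n) = - (c ^ n * A)"
  proof -
    have "(\<lambda>k. sinc (real (Suc k) - \<tau>) ^ n) = (\<lambda>k. - (c ^ n * ((-1) ^ Suc k / (real (Suc k) + - \<tau>) ^ n)))"
      by (rule ext, subst sinc_pos_shift[OF t], simp only: c_def power_mult_distrib power_divide od) simp
    hence "(\<Sum>k. sinc (real (Suc k) - \<tau>) ^ n) = (\<Sum>k. - (c ^ n * ((-1) ^ Suc k / (real (Suc k) + - \<tau>) ^ n)))"
      by (simp only:)
    also have "\<dots> = - (\<Sum>k. c ^ n * ((-1) ^ Suc k / (real (Suc k) + - \<tau>) ^ n))"
      by (rule suminf_minus) (rule summable_mult[OF sA])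
    also have "(\<Sum>k. c ^ n * ((-1) ^ Suc k / (real (Suc k) + - \<tau>) ^ n)) = c ^ n * A"
      unfolding A_def by (rule suminf_mult[OF sA])
    finally show ?thesis .
  qed
  have e2: "(\<Sum>t. sinc (- real (Suc t) - \<tau>) ^ n) = c ^ n * B"
  proof -
    have "(\<lambda>k. sinc (- real (Suc k) - \<tau>) ^ n) = (\<lambda>k. c ^ n * ((-1) ^ Suc k / (real (Suc k) + \<tau>) ^ n))"
      by (rule ext, subst sinc_neg_shift[OF t], simp only: c_def power_mult_distrib power_divide od)
    thus ?thesis using suminf_mult[OF sB, of "c ^ n"] B_def by simp
  qed
  have h1: "alt_hurwitz_zeta n \<tau> = 1 / \<tau> ^ n + B" unfolding B_def using t n2 by (intro az_split) auto
  have h2: "alt_hurwitz_zeta n (- \<tau>) = - (1 / \<tau> ^ n) + A"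
    using az_split[of "- \<tau>" n] t n2 n(1) unfolding A_def by simp
  have tn: "\<tau> ^ n \<noteq> 0" using t by simp
  show ?thesis unfolding G_def e1 e2 h1 h2 c_def using tn t
    by (simp add: power_mult_distrib field_simps)
qed


theorem lemma1:
  fixes n :: nat and \<tau> :: real
  assumes "0 < \<tau>" and "\<tau> < 1" and "n \<ge> 1"
  shows "(n = 1 \<longrightarrow> G n \<tau> = 1 - sinc \<tau>)
       \<and> (even n \<longrightarrow> G n \<tau> = sinc \<tau> ^ n *
              (\<tau> ^ n * (hurwitz_zeta n \<tau> + hurwitz_zeta n (- \<tau>)) - 2))
       \<and> (odd n \<and> n \<ge> 3 \<longrightarrow> G n \<tau> = sinc \<tau> ^ n *
              (\<tau> ^ n * (alt_hurwitz_zeta n \<tau> - alt_hurwitz_zeta n (- \<tau>)) - 2))"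
proof (intro conjI impI)
  assume "n = 1" thus "G n \<tau> = 1 - sinc \<tau>" using G_case1 assms by simp
next
  assume e: "even n"
  hence "n \<ge> 2" using assms(3) by presburger
  thus "G n \<tau> = sinc \<tau> ^ n * (\<tau> ^ n * (hurwitz_zeta n \<tau> + hurwitz_zeta n (- \<tau>)) - 2)"
    using G_even assms e by blast
next
  assume "odd n \<and> n \<ge> 3"
  thus "G n \<tau> = sinc \<tau> ^ n * (\<tau> ^ n * (alt_hurwitz_zeta n \<tau> - alt_hurwitz_zeta n (- \<tau>)) - 2)"
    using G_odd assms by blast
qed

end
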